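(* For every positive integer $k$ and every prime number $p$, $$v_p\bigl(F_{kp,k}\bigr) = -k.$$
   Context: For $n,k \in \mathbb{N}$ with $n \geq k$, $$F_{n,k} = \sum_{\substack{i_1,\dots,i_k \in \mathbb{N}^* \\ i_1+\dots+i_k = n}} \frac{1}{i_1 i_2 \cdots i_k},$$ where $\mathbb{N}^*$ denotes the positive integers. $v_p$ denotes the $p$-adic valuation on $\mathbb{Q}^*$. *)

theory Defs
  imports "HOL-Computational_Algebra.Computational_Algebra" "HOL-Library.FuncSet"
begin

definition compositions :: "nat \<Rightarrow> nat \<Rightarrow> (nat \<Rightarrow> nat) set" where
  "compositions n k = {i \<in> {1..k} \<rightarrow>\<^sub>E {1..n}. (\<Sum>j=1..k. i j) = n}"

definition F :: "nat \<Rightarrow> nat \<Rightarrow> rat" where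
  "F n k = (\<Sum>i\<in>compositions n k. 1 / (\<Prod>j=1..k. of_nat (i j)))"

text \<open>p-adic valuation on nonzero rationals (value 0 at 0 by convention).\<close>
definition padic_val :: "nat \<Rightarrow> rat \<Rightarrow> int" where
  "padic_val p x = (let (a, b) = quotient_of x in
     int (multiplicity (int p) a) - int (multiplicity (int p) b))"

end

theory Submission
  imports Defs
begin

lemma mul_le_pow: "(p::nat) \<ge> 2 \<Longrightarrow> p * e \<le> p ^ e"
proof (induction e)
  case 0 then show ?case by simp
next
  case (Suc e)
  show ?case
  proof (cases "e = 0")
    case True then show ?thesis by simp
  next
    case False
    have "p \<le> p ^ e" using False Suc.prems
      by (metis One_nat_def less_one not_less one_le_numeral order_trans power_increasing power_one_right)
    then have "p * Suc e \<le> p ^ e + p ^ e" using Suc by simp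
    also have "\<dots> \<le> p * p ^ e" using Suc.prems by (simp add: mult_2[symmetric] )
    finally show ?thesis by simp
  qed
qed

lemma val_div:
  fixes a b :: int
  assumes p: "prime p" and a: "a \<noteq> 0" and b: "b > 0"
  shows "padic_val p (of_int a / of_int b) = int (multiplicity (int p) a) - int (multiplicity (int p) b)"
proof -
  obtain n d where q: "quotient_of (of_int a / of_int b) = (n, d)" by (cases "quotient_of (of_int a / of_int b)")
  have d: "d > 0" using quotient_of_denom_pos[OF q] .
  have eq: "(of_int a / of_int b :: rat) = of_int n / of_int d" using quotient_of_div[OF q] .
  have n: "n \<noteq> 0" using eq a b d by auto
  have "(of_int (a * d) :: rat) = of_int (n * b)" using eq b d
    by (simp add: field_simps)
  then have ad: "a * d = n * b" by (simp only: of_int_eq_iff)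
  have pe: "prime_elem (int p)" using p by simp
  have "multiplicity (int p) a + multiplicity (int p) d = multiplicity (int p) n + multiplicity (int p) b"
    using prime_elem_multiplicity_mult_distrib[OF pe, of a d] prime_elem_multiplicity_mult_distrib[OF pe, of n b]
      ad a n b d by simp
  then show ?thesis unfolding padic_val_def q by simp
qed

lemma bound:
  assumes p: "prime p" and k: "k > 0"
    and iC: "i \<in> compositions (k*p) k" and ne: "i \<noteq> restrict (\<lambda>_. p) {1..k}"
  shows "multiplicity p (\<Prod>j=1..k. i j) < k"
proof -
  define e where "e j = multiplicity p (i j)" for j
  have p2: "p \<ge> 2" using p prime_ge_2_nat by blast
  have pos: "\<forall>j\<in>{1..k}. i j \<ge> 1" and sumi: "(\<Sum>j=1..k. i j) = k*p"
    and ext: "i \<in> extensional {1..k}"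
    using iC unfolding compositions_def by (auto simp: PiE_def)
  have mp: "multiplicity p (\<Prod>j=1..k. i j) = (\<Sum>j=1..k. e j)"
    unfolding e_def using p pos by (intro prime_elem_multiplicity_prod_distrib) auto
  have A: "\<forall>j\<in>{1..k}. p * e j \<le> i j"
  proof
    fix j assume j: "j \<in> {1..k}"
    have "p ^ e j dvd i j" unfolding e_def by (rule multiplicity_dvd)
    moreover have "i j \<ge> 1" using pos j by blast
    ultimately have "p ^ e j \<le> i j" by (intro dvd_imp_le) auto
    then show "p * e j \<le> i j" using mul_le_pow[OF p2, of "e j"] by simp
  qed
  show ?thesis
  proof (rule ccontr)
    assume "\<not> ?thesis"
    then have ge: "(\<Sum>j=1..k. e j) \<ge> k" using mp by simp
    have B: "\<forall>j\<in>{1..k}. p * e j = i j"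
    proof (rule ccontr)
      assume "\<not> ?thesis"
      then obtain j where j: "j \<in> {1..k}" "p * e j < i j" using A by force
      have "(\<Sum>j=1..k. p * e j) < (\<Sum>j=1..k. i j)"
        using A j by (intro sum_strict_mono_ex1) auto
      also have "\<dots> = k * p" by (rule sumi)
      also have "\<dots> \<le> p * (\<Sum>j=1..k. e j)" using ge by simp
      finally show False by (simp add: sum_distrib_left)
    qed
    have "p * (\<Sum>j=1..k. e j) = k * p" using B sumi by (simp add: sum_distrib_left)
    then have se: "(\<Sum>j=1..k. e j) = k" using p2 by simp
    have e1: "\<forall>j\<in>{1..k}. e j \<ge> 1" using B pos by (metis mult_0_right not_less_eq_eq le_zero_eq one_neq_zero Suc_le_eq neq0_conv less_one)
    have C: "\<forall>j\<in>{1..k}. e j = 1"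
    proof (rule ccontr)
      assume "\<not> ?thesis"
      then obtain j where j: "j \<in> {1..k}" "1 < e j" using e1 by force
      have "(\<Sum>j=1..k. (1::nat)) < (\<Sum>j=1..k. e j)"
        using e1 j by (intro sum_strict_mono_ex1) auto
      then show False using se by simp
    qed
    have "i = restrict (\<lambda>_. p) {1..k}"
    proof (rule extensionalityI[OF ext])
      show "restrict (\<lambda>_. p) {1..k} \<in> extensional {1..k}" by simp
      fix x assume "x \<in> {1..k}"
      then show "i x = restrict (\<lambda>_. p) {1..k} x" using B C by auto
    qed
    then show False using ne by simp
  qed
qed


definition G :: "nat \<Rightarrow> nat \<Rightarrow> rat \<Rightarrow> bool" where
  "G p k x = (\<exists>c d::int. d > 0 \<and> \<not> int p dvd d \<and> x = of_int c / (of_int p ^ (k-1) * of_int d))"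

lemma G_0: "prime p \<Longrightarrow> G p k 0" unfolding G_def
  by (rule exI[of _ 0], rule exI[of _ 1]) auto

lemma G_add:
  assumes p: "prime p" and x: "G p k x" and y: "G p k y" shows "G p k (x + y)"
proof -
  obtain c d where cd: "d > 0" "\<not> int p dvd d" "x = of_int c / (of_int p ^ (k-1) * of_int d)"
    using x unfolding G_def by blast
  obtain c' d' where cd': "d' > 0" "\<not> int p dvd d'" "y = of_int c' / (of_int p ^ (k-1) * of_int d')"
    using y unfolding G_def by blast
  have pp: "prime (int p)" using p by simp
  have nd: "\<not> int p dvd d * d'" using cd cd' pp by (metis prime_dvd_mult_iff)
  have p0: "(of_int p :: rat) \<noteq> 0" using p by (simp add: prime_gt_0_nat)
  have "x + y = of_int (c * d' + c' * d) / (of_int p ^ (k-1) * of_int (d * d'))"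
    using cd cd' p0 by (simp add: field_simps)
  then show ?thesis unfolding G_def using nd cd cd' by (intro exI[of _ "c * d' + c' * d"] exI[of _ "d*d'"]) auto
qed

lemma G_sum:
  assumes p: "prime p" and fin: "finite A" and all: "\<forall>a\<in>A. G p k (f a)"
  shows "G p k (sum f A)"
  using fin all
proof (induction A rule: finite_induct)
  case empty then show ?case using p by (simp add: G_0)
next
  case (insert x A) then show ?case by (simp add: G_add[OF p])
qed

lemma G_term:
  assumes p: "prime p" and P: "P > 0" and m: "multiplicity p P < k"
  shows "G p k (1 / of_nat P)"
proof -
  define e where "e = multiplicity p P"
  define q where "q = P div p ^ e"
  have q: "P = p ^ e * q" "\<not> p dvd q" unfolding q_def e_def
    using multiplicity_dvd[of p P] multiplicity_decompose[of P p] P p prime_gt_1_nat[OF p] by auto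
  have q0: "q > 0" using q P by (cases "q = 0") auto
  have p0: "(of_nat p :: rat) \<noteq> 0" using p by (simp add: prime_gt_0_nat)
  have ke: "k - 1 = (k - 1 - e) + e" using m e_def by simp
  have "(1 / of_nat P :: rat) = of_int (int p ^ (k-1-e)) / (of_int (int p) ^ (k-1) * of_int (int q))"
  proof -
    have pw: "(of_int (int p) ^ (k-1) :: rat) = of_nat p ^ (k-1-e) * of_nat p ^ e"
      using ke by (metis of_int_of_nat_eq power_add)
    have "(of_nat P :: rat) = of_nat p ^ e * of_nat q" using q by simp
    then show ?thesis unfolding pw using p0 q0 by (simp add: divide_simps)
  qed
  then show ?thesis unfolding G_def using q q0
    by (intro exI[of _ "int p ^ (k-1-e)"] exI[of _ "int q"]) auto
qed

theorem lemma3: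
  fixes k p :: nat
  assumes "k > 0" and "prime p"
  shows "padic_val p (F (k * p) k) = - int k"
proof -
  note k = assms(1) and p = assms(2)
  define c0 where "c0 = restrict (\<lambda>_. p) {1..k}"
  define C where "C = compositions (k*p) k"
  have p1: "p \<ge> 1" using p prime_ge_1_nat by blast
  have finC: "finite C" unfolding C_def compositions_def
    by (rule finite_subset[of _ "{1..k} \<rightarrow>\<^sub>E {1..k*p}"]) (auto intro: finite_PiE)
  have c0C: "c0 \<in> C" unfolding C_def compositions_def c0_def using k p1 by auto
  have t0: "(1 / (\<Prod>j=1..k. of_nat (c0 j)) :: rat) = 1 / of_nat p ^ k" unfolding c0_def by simp
  have Grest: "G p k (\<Sum>i\<in>C - {c0}. 1 / (\<Prod>j=1..k. of_nat (i j)))"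
  proof (rule G_sum[OF p])
    show "finite (C - {c0})" using finC by simp
    show "\<forall>a\<in>C - {c0}. G p k (1 / (\<Prod>j=1..k. of_nat (a j)))"
    proof
      fix i assume i: "i \<in> C - {c0}"
      have pos: "\<forall>j\<in>{1..k}. i j \<ge> 1" using i unfolding C_def compositions_def by auto
      have P: "(\<Prod>j=1..k. i j) > 0"
      proof (intro prod_pos)
        fix j assume "j \<in> {1..k}"
        then have "i j \<ge> 1" using pos by blast
        then show "i j > 0" by simp
      qed
      have m: "multiplicity p (\<Prod>j=1..k. i j) < k"
        using bound[OF p k, of i] i unfolding C_def c0_def by auto
      have "(\<Prod>j=1..k. of_nat (i j) :: rat) = of_nat (\<Prod>j=1..k. i j)" by simp
      then show "G p k (1 / (\<Prod>j=1..k. of_nat (i j)))" using G_term[OF p P m] by simp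
    qed
  qed
  obtain c d where cd: "d > 0" "\<not> int p dvd d"
    "(\<Sum>i\<in>C - {c0}. 1 / (\<Prod>j=1..k. of_nat (i j))) = (of_int c / (of_int p ^ (k-1) * of_int d) :: rat)"
    using Grest unfolding G_def by blast
  have FF: "F (k*p) k = 1 / of_nat p ^ k + of_int c / (of_int p ^ (k-1) * of_int d)"
    unfolding F_def C_def[symmetric] using finC c0C t0 cd(3) by (simp add: sum.remove)
  have p0: "(of_nat p :: rat) \<noteq> 0" using p by (simp add: prime_gt_0_nat)
  have kk: "k = Suc (k - 1)" using k by simp
  have "F (k*p) k = of_int (d + int p * c) / of_int (int p ^ k * d)"
    unfolding FF apply (subst (1 3) kk) using p0 cd(1) by (simp add: field_simps)
  moreover have nd: "\<not> int p dvd (d + int p * c)" using cd(2) by (simp add: dvd_add_left_iff)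
  moreover have "d + int p * c \<noteq> 0" using nd by auto
  moreover have "int p ^ k * d > 0" using cd(1) p1 by simp
  moreover have "multiplicity (int p) (int p ^ k * d) = k"
  proof -
    have pe: "prime_elem (int p)" using p by simp
    have "multiplicity (int p) (int p ^ k * d) = multiplicity (int p) (int p ^ k) + multiplicity (int p) d"
      using cd(1) p1 by (intro prime_elem_multiplicity_mult_distrib[OF pe]) auto
    then show ?thesis using pe cd(2) by (simp add: not_dvd_imp_multiplicity_0)
  qed
  ultimately show ?thesis using val_div[OF p, of "d + int p * c" "int p ^ k * d"]
    by (simp add: not_dvd_imp_multiplicity_0)
qed

end
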